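(* For every graph $G$, every linear order $\prec$ on $V(G)$ and every $r\in\mathbb N$, \[\mathrm{wcol}_r(\mathrm{cp}(G),\mathrm{cp}(\prec))\le 2\cdot\mathrm{wcol}_r(G,\prec).\]
   Context: The copy product $\mathrm{cp}(G)$ is obtained by taking the disjoint union of $G$ with a copy $G'$ (the copy of $v$ denoted $\mathrm{cp}(v)$), making every $v$ adjacent to $\mathrm{cp}(v)$, and making $v$ and $\mathrm{cp}(v)$ true twins (same closed neighborhoods); equivalently the lexicographic product of $G$ with $K_2$. $\mathrm{cp}(\prec)$ is the order on $V(\mathrm{cp}(G))$ obtained from $\prec$ by inserting each $\mathrm{cp}(v)$ immediately before $v$. $\mathrm{wcol}_r(H,\prec)$ is the maximum over $v$ of the number of vertices $u$ such that some path of length at most $r$ from $v$ to $u$ has $u$ as its $\prec$-smallest vertex. *)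

theory Defs
  imports Main
begin

definition is_graph :: "'a set \<Rightarrow> ('a \<Rightarrow> 'a \<Rightarrow> bool) \<Rightarrow> bool" where
  "is_graph V E \<longleftrightarrow> finite V \<and> (\<forall>u w. E u w \<longrightarrow> u \<in> V \<and> w \<in> V)
     \<and> (\<forall>u w. E u w \<longrightarrow> E w u) \<and> (\<forall>u. \<not> E u u)"

definition linorder_on :: "'a set \<Rightarrow> ('a \<Rightarrow> 'a \<Rightarrow> bool) \<Rightarrow> bool" where
  "linorder_on V lt \<longleftrightarrow> (\<forall>x\<in>V. \<not> lt x x)
     \<and> (\<forall>x\<in>V. \<forall>y\<in>V. \<forall>z\<in>V. lt x y \<longrightarrow> lt y z \<longrightarrow> lt x z)
     \<and> (\<forall>x\<in>V. \<forall>y\<in>V. x \<noteq> y \<longrightarrow> lt x y \<or> lt y x)"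

text \<open>A path, given as the (nonempty, repetition-free) list of its vertices;
  its length is the number of edges, i.e. length ps - 1.\<close>
definition is_path :: "'a set \<Rightarrow> ('a \<Rightarrow> 'a \<Rightarrow> bool) \<Rightarrow> 'a list \<Rightarrow> bool" where
  "is_path V E ps \<longleftrightarrow> ps \<noteq> [] \<and> set ps \<subseteq> V \<and> distinct ps
     \<and> (\<forall>i. Suc i < length ps \<longrightarrow> E (ps ! i) (ps ! Suc i))"

definition wreach :: "'a set \<Rightarrow> ('a \<Rightarrow> 'a \<Rightarrow> bool) \<Rightarrow> ('a \<Rightarrow> 'a \<Rightarrow> bool) \<Rightarrow> nat \<Rightarrow> 'a \<Rightarrow> 'a set" where
  "wreach V E lt r v = {u. \<exists>ps. is_path V E ps \<and> hd ps = v \<and> last ps = u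
      \<and> length ps \<le> Suc r \<and> (\<forall>x\<in>set ps. x = u \<or> lt u x)}"

definition wcol :: "'a set \<Rightarrow> ('a \<Rightarrow> 'a \<Rightarrow> bool) \<Rightarrow> ('a \<Rightarrow> 'a \<Rightarrow> bool) \<Rightarrow> nat \<Rightarrow> nat" where
  "wcol V E lt r = Max (insert 0 ((\<lambda>v. card (wreach V E lt r v)) ` V))"

text \<open>Copy product: vertex (v, False) is v, (v, True) is cp(v).\<close>
definition cp_V :: "'a set \<Rightarrow> ('a \<times> bool) set" where
  "cp_V V = V \<times> UNIV"

definition cp_E :: "'a set \<Rightarrow> ('a \<Rightarrow> 'a \<Rightarrow> bool) \<Rightarrow> ('a \<times> bool) \<Rightarrow> ('a \<times> bool) \<Rightarrow> bool" where
  "cp_E V E x y \<longleftrightarrow> (fst x = fst y \<and> fst x \<in> V \<and> snd x \<noteq> snd y) \<or> E (fst x) (fst y)"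

text \<open>cp(lt): each copy cp(v) is inserted immediately before v.\<close>
definition cp_lt :: "('a \<Rightarrow> 'a \<Rightarrow> bool) \<Rightarrow> ('a \<times> bool) \<Rightarrow> ('a \<times> bool) \<Rightarrow> bool" where
  "cp_lt lt x y \<longleftrightarrow> lt (fst x) (fst y) \<or> (fst x = fst y \<and> snd x \<and> \<not> snd y)"

end

theory Submission
  imports Defs
begin

lemma path_drop:
  assumes "is_path V E p" "n < length p"
  shows "is_path V E (drop n p)"
  using assms unfolding is_path_def
  by (auto simp: distinct_drop dest: in_set_dropD)

lemma path_cons:
  assumes "is_path V E p" "x \<in> V" "x \<notin> set p" "E x (hd p)"
  shows "is_path V E (x # p)"
  using assms unfolding is_path_def
  apply (auto simp: hd_conv_nth)
  subgoal for i by (cases i) auto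
  done

lemma walk_to_path:
  "ws \<noteq> [] \<Longrightarrow> set ws \<subseteq> V \<Longrightarrow>
   (\<forall>i. Suc i < length ws \<longrightarrow> ws!i = ws!Suc i \<or> E (ws!i) (ws!Suc i)) \<Longrightarrow>
   \<exists>ps. is_path V E ps \<and> hd ps = hd ws \<and> last ps = last ws \<and> length ps \<le> length ws \<and> set ps \<subseteq> set ws"
proof (induction ws)
  case Nil
  then show ?case by simp
next
  case (Cons x w)
  show ?case
  proof (cases "w = []")
    case True
    then show ?thesis using Cons.prems
      by (intro exI[of _ "[x]"]) (auto simp: is_path_def)
  next
    case False
    have st: "\<forall>i. Suc i < length w \<longrightarrow> w!i = w!Suc i \<or> E (w!i) (w!Suc i)"
    proof (intro allI impI)
      fix i assume "Suc i < length w"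
      then show "w!i = w!Suc i \<or> E (w!i) (w!Suc i)"
        using Cons.prems(3)[rule_format, of "Suc i"] by simp
    qed
    from Cons.IH[OF False _ st] Cons.prems(2) obtain p where
      p: "is_path V E p" "hd p = hd w" "last p = last w" "length p \<le> length w" "set p \<subseteq> set w"
      by auto
    have s0: "x = hd w \<or> E x (hd w)"
      using Cons.prems(3)[rule_format, of 0] False by (simp add: hd_conv_nth)
    have pne: "p \<noteq> []" using p(1) by (simp add: is_path_def)
    show ?thesis
    proof (cases "x \<in> set p")
      case True
      then obtain n where n: "n < length p" "p!n = x" by (auto simp: in_set_conv_nth)
      show ?thesis
        apply (rule exI[of _ "drop n p"])
        using path_drop[OF p(1) n(1)] n p False pne
        by (auto simp: hd_drop_conv_nth dest: in_set_dropD)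
    next
      case xn: False
      then have "x \<noteq> hd p" using pne by auto
      then have "E x (hd p)" using s0 p(2) by auto
      then have "is_path V E (x # p)" using path_cons[OF p(1)] xn Cons.prems(2) by auto
      then show ?thesis using p False pne by (intro exI[of _ "x # p"]) auto
    qed
  qed
qed

lemma wreach_sub:
  assumes g: "is_graph V E"
  shows "wreach (cp_V V) (cp_E V E) (cp_lt lt) r (v, b) \<subseteq> wreach V E lt r v \<times> UNIV"
proof
  fix y assume "y \<in> wreach (cp_V V) (cp_E V E) (cp_lt lt) r (v, b)"
  then obtain ps where ps: "is_path (cp_V V) (cp_E V E) ps" "hd ps = (v,b)" "last ps = y"
    "length ps \<le> Suc r" "\<forall>x\<in>set ps. x = y \<or> cp_lt lt y x"
    unfolding wreach_def by auto
  obtain u c where y: "y = (u, c)" by (cases y)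
  let ?ws = "map fst ps"
  have ne: "?ws \<noteq> []" using ps(1) by (simp add: is_path_def)
  have sV: "set ?ws \<subseteq> V" using ps(1) by (auto simp: is_path_def cp_V_def)
  have st: "\<forall>i. Suc i < length ?ws \<longrightarrow> ?ws!i = ?ws!Suc i \<or> E (?ws!i) (?ws!Suc i)"
    using ps(1) by (auto simp: is_path_def cp_E_def)
  obtain p where p: "is_path V E p" "hd p = hd ?ws" "last p = last ?ws" "length p \<le> length ?ws"
    "set p \<subseteq> set ?ws"
    using walk_to_path[OF ne sV st] by blast
  have "hd p = v" using p(2) ps(2) ne by (simp add: hd_map)
  moreover have "last p = u" using p(3) ps(3) ne y by (simp add: last_map)
  moreover have "\<forall>z\<in>set p. z = u \<or> lt u z"
    using p(5) ps(5) y by (fastforce simp: cp_lt_def)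
  ultimately have "u \<in> wreach V E lt r v"
    using p ps(4) unfolding wreach_def by auto
  then show "y \<in> wreach V E lt r v \<times> UNIV" using y by auto
qed

theorem lemma7p20:
  fixes V :: "'a set" and E :: "'a \<Rightarrow> 'a \<Rightarrow> bool" and lt :: "'a \<Rightarrow> 'a \<Rightarrow> bool" and r :: nat
  assumes "is_graph V E" and "linorder_on V lt"
  shows "wcol (cp_V V) (cp_E V E) (cp_lt lt) r \<le> 2 * wcol V E lt r"
proof -
  have fV: "finite V" using assms(1) by (simp add: is_graph_def)
  have fcp: "finite (cp_V V)" using fV by (simp add: cp_V_def)
  have wsub: "wreach V E lt r v \<subseteq> V" for v
    by (auto simp: wreach_def is_path_def)
  have fin: "finite (wreach V E lt r v)" for v using wsub fV finite_subset by blast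
  have bound: "card (wreach (cp_V V) (cp_E V E) (cp_lt lt) r x) \<le> 2 * wcol V E lt r"
    if "x \<in> cp_V V" for x
  proof -
    obtain v b where x: "x = (v, b)" by (cases x)
    have vV: "v \<in> V" using that x by (simp add: cp_V_def)
    have "card (wreach (cp_V V) (cp_E V E) (cp_lt lt) r x) \<le> card (wreach V E lt r v \<times> (UNIV::bool set))"
    proof -
      have "finite (wreach V E lt r v \<times> (UNIV::bool set))" using fin by simp
      then show ?thesis using card_mono[OF _ wreach_sub[OF assms(1), of lt r v b]] x by blast
    qed
    also have "\<dots> = 2 * card (wreach V E lt r v)"
      by (simp add: card_cartesian_product)
    also have "card (wreach V E lt r v) \<le> wcol V E lt r"
      unfolding wcol_def using fV vV by (intro Max_ge) auto
    finally show ?thesis by simp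
  qed
  show ?thesis
    unfolding wcol_def[of "cp_V V"] using fcp bound
    by (subst Max_le_iff) (auto simp: wcol_def)
qed

end
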